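(* Let $R$ be the ring of integers of a nonarchimedean local field of characteristic not $2$ in which $2$ is a prime element, and let $\ell$ be an even $R$-lattice of rank $n\ge1$. If $J$ is an $R$-lattice such that $Q^\ast(\ell)\cap Q^\ast(J)\ne\varnothing$, then $\ell$ is primitively represented by $\mathbb{H}^{n-1}\perp J$.
   Context: An $R$-lattice is a finitely generated $R$-submodule of a quadratic space $(V,B)$ over $F$ with $Q(v)=B(v,v)$, assumed integral ($B(L,L)\subseteq R$) and nondegenerate; it is even if $Q(L)\subseteq 2R$. $Q^\ast(L)=\{Q(v): v\in L\text{ primitive}\}$, where $v$ is primitive if $Rv$ is a direct summand of $L$. A representation is an $R$-linear map preserving $B$, primitive if its image is a direct summand. $\mathbb{H}$ is the binary lattice with Gram matrix $\begin{pmatrix}0&1\\1&0\end{pmatrix}$ and $\mathbb{H}^{k}$ the orthogonal sum of $k$ copies ($\mathbb{H}^0=0$). *)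

theory Defs
  imports Main
begin

text \<open>R is the valuation ring of a discrete valuation v on the field 'a
(the local field F) with v 2 = 1 (so 2 is a prime element / uniformizer and
char F is not 2), F complete for v, and residue field R/2R finite.\<close>

definition is_dvaluation :: "('a::field \<Rightarrow> int) \<Rightarrow> bool" where
  "is_dvaluation v \<longleftrightarrow>
     (\<forall>x y. x \<noteq> 0 \<longrightarrow> y \<noteq> 0 \<longrightarrow> v (x * y) = v x + v y) \<and>
     (\<forall>x y. x \<noteq> 0 \<longrightarrow> y \<noteq> 0 \<longrightarrow> x + y \<noteq> 0 \<longrightarrow> v (x + y) \<ge> min (v x) (v y))"

definition v_cauchy :: "('a::field \<Rightarrow> int) \<Rightarrow> (nat \<Rightarrow> 'a) \<Rightarrow> bool" where
  "v_cauchy v s \<longleftrightarrow> (\<forall>N::int. \<exists>M. \<forall>m\<ge>M. \<forall>k\<ge>M. s m = s k \<or> v (s m - s k) \<ge> N)"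

definition v_converges :: "('a::field \<Rightarrow> int) \<Rightarrow> (nat \<Rightarrow> 'a) \<Rightarrow> 'a \<Rightarrow> bool" where
  "v_converges v s L \<longleftrightarrow> (\<forall>N::int. \<exists>M. \<forall>m\<ge>M. s m = L \<or> v (s m - L) \<ge> N)"

definition dyadic_local_int_ring :: "'a::field set \<Rightarrow> bool" where
  "dyadic_local_int_ring R \<longleftrightarrow>
     (\<exists>v::'a \<Rightarrow> int.
        is_dvaluation v \<and>
        (2::'a) \<noteq> 0 \<and> v 2 = 1 \<and>
        R = {x. x = 0 \<or> v x \<ge> 0} \<and>
        (\<forall>s. v_cauchy v s \<longrightarrow> (\<exists>L. v_converges v s L)) \<and>
        (\<exists>S. finite S \<and> S \<subseteq> R \<and> (\<forall>x\<in>R. \<exists>y\<in>S. x - y \<in> {2 * r | r. r \<in> R})))"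

text \<open>Since R is a PID, every R-lattice is free; a lattice of rank k is
modelled (up to isometry) as R^k with a Gram matrix G (indices < k).\<close>

definition vecs :: "'a::field set \<Rightarrow> nat \<Rightarrow> (nat \<Rightarrow> 'a) set" where
  "vecs A k = {x. (\<forall>i<k. x i \<in> A) \<and> (\<forall>i\<ge>k. x i = 0)}"

definition bil :: "nat \<Rightarrow> (nat \<Rightarrow> nat \<Rightarrow> 'a::field) \<Rightarrow> (nat \<Rightarrow> 'a) \<Rightarrow> (nat \<Rightarrow> 'a) \<Rightarrow> 'a" where
  "bil k G x y = (\<Sum>i<k. \<Sum>j<k. x i * G i j * y j)"

definition Qf :: "nat \<Rightarrow> (nat \<Rightarrow> nat \<Rightarrow> 'a::field) \<Rightarrow> (nat \<Rightarrow> 'a) \<Rightarrow> 'a" where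
  "Qf k G x = bil k G x x"

definition is_lattice :: "'a::field set \<Rightarrow> nat \<Rightarrow> (nat \<Rightarrow> nat \<Rightarrow> 'a) \<Rightarrow> bool" where
  "is_lattice R k G \<longleftrightarrow>
     (\<forall>i<k. \<forall>j<k. G i j = G j i) \<and>
     (\<forall>x\<in>vecs R k. \<forall>y\<in>vecs R k. bil k G x y \<in> R) \<and>
     (\<forall>x\<in>vecs UNIV k. (\<forall>y\<in>vecs UNIV k. bil k G x y = 0) \<longrightarrow> x = (\<lambda>_. 0))"

definition even_lattice :: "'a::field set \<Rightarrow> nat \<Rightarrow> (nat \<Rightarrow> nat \<Rightarrow> 'a) \<Rightarrow> bool" where
  "even_lattice R k G \<longleftrightarrow> (\<forall>x\<in>vecs R k. Qf k G x \<in> {2 * r | r. r \<in> R})"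

definition submod :: "'a::field set \<Rightarrow> nat \<Rightarrow> (nat \<Rightarrow> 'a) set \<Rightarrow> bool" where
  "submod R k M \<longleftrightarrow> M \<subseteq> vecs R k \<and> (\<lambda>_. 0) \<in> M \<and>
     (\<forall>x\<in>M. \<forall>y\<in>M. (\<lambda>i. x i + y i) \<in> M) \<and>
     (\<forall>r\<in>R. \<forall>x\<in>M. (\<lambda>i. r * x i) \<in> M)"

definition direct_summand :: "'a::field set \<Rightarrow> nat \<Rightarrow> (nat \<Rightarrow> 'a) set \<Rightarrow> bool" where
  "direct_summand R k M \<longleftrightarrow> submod R k M \<and>
     (\<exists>N. submod R k N \<and> M \<inter> N = {\<lambda>_. 0} \<and>
          vecs R k = {(\<lambda>i. x i + y i) | x y. x \<in> M \<and> y \<in> N})"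

definition primitive_vec :: "'a::field set \<Rightarrow> nat \<Rightarrow> (nat \<Rightarrow> 'a) \<Rightarrow> bool" where
  "primitive_vec R k x \<longleftrightarrow> x \<in> vecs R k \<and> x \<noteq> (\<lambda>_. 0) \<and>
     direct_summand R k {(\<lambda>i. r * x i) | r. r \<in> R}"

definition Qstar :: "'a::field set \<Rightarrow> nat \<Rightarrow> (nat \<Rightarrow> nat \<Rightarrow> 'a) \<Rightarrow> 'a set" where
  "Qstar R k G = {Qf k G x | x. primitive_vec R k x}"

definition prim_repr :: "'a::field set \<Rightarrow> nat \<Rightarrow> (nat \<Rightarrow> nat \<Rightarrow> 'a) \<Rightarrow> nat \<Rightarrow> (nat \<Rightarrow> nat \<Rightarrow> 'a)
     \<Rightarrow> ((nat \<Rightarrow> 'a) \<Rightarrow> (nat \<Rightarrow> 'a)) \<Rightarrow> bool" where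
  "prim_repr R n G m H \<sigma> \<longleftrightarrow>
     (\<forall>x\<in>vecs R n. \<sigma> x \<in> vecs R m) \<and>
     (\<forall>x\<in>vecs R n. \<forall>y\<in>vecs R n. \<sigma> (\<lambda>i. x i + y i) = (\<lambda>i. \<sigma> x i + \<sigma> y i)) \<and>
     (\<forall>r\<in>R. \<forall>x\<in>vecs R n. \<sigma> (\<lambda>i. r * x i) = (\<lambda>i. r * \<sigma> x i)) \<and>
     (\<forall>x\<in>vecs R n. \<forall>y\<in>vecs R n. bil m H (\<sigma> x) (\<sigma> y) = bil n G x y) \<and>
     direct_summand R m (\<sigma> ` vecs R n)"

text \<open>Gram matrix of H^k \<perp> J (J of rank kJ with Gram matrix GJ); rank 2k + kJ.\<close>
definition hyp_sum :: "nat \<Rightarrow> (nat \<Rightarrow> nat \<Rightarrow> 'a::field) \<Rightarrow> nat \<Rightarrow> nat \<Rightarrow> 'a" where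
  "hyp_sum k GJ i j =
     (if i < 2 * k \<and> j < 2 * k then (if i div 2 = j div 2 \<and> i \<noteq> j then 1 else 0)
      else if 2 * k \<le> i \<and> 2 * k \<le> j then GJ (i - 2 * k) (j - 2 * k) else 0)"

end

theory Submission
  imports Defs
begin


lemma dv_one: assumes "is_dvaluation val" shows "val 1 = 0"
  using assms unfolding is_dvaluation_def by (metis add_cancel_left_right mult_1 one_neq_zero)

lemma dv_mult: assumes "is_dvaluation val" "x \<noteq> 0" "y \<noteq> 0" shows "val (x * y) = val x + val y"
  using assms unfolding is_dvaluation_def by blast

lemma dv_neg1: assumes "is_dvaluation val" shows "val (-1) = 0"
proof -
  have "val ((-1) * (-1)) = val (-1) + val (-1)" by (rule dv_mult[OF assms]) simp_all
  moreover have "(-1) * (-1) = (1::'a)" by simp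
  ultimately show ?thesis using dv_one[OF assms] by simp
qed

lemma dv_inv: assumes "is_dvaluation val" "x \<noteq> 0" shows "val (inverse x) = - val x"
proof -
  have "val (x * inverse x) = val x + val (inverse x)" by (rule dv_mult[OF assms(1)]) (use assms(2) in simp_all)
  moreover have "x * inverse x = 1" using assms(2) by simp
  ultimately show ?thesis using dv_one[OF assms(1)] assms(2) by simp
qed

locale dvr =
  fixes R :: "'a::field set" and val :: "'a \<Rightarrow> int"
  assumes dv: "is_dvaluation val" and two: "(2::'a) \<noteq> 0" "val 2 = 1"
    and RR: "R = {x. x = 0 \<or> val x \<ge> 0}"
begin

lemma memR: "a \<in> R \<longleftrightarrow> a = 0 \<or> val a \<ge> 0" using RR by simp

lemma R0[simp]: "0 \<in> R" using RR by simp
lemma R1[simp]: "1 \<in> R" using RR dv_one[OF dv] by simp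
lemma R2[simp]: "2 \<in> R" using RR two by simp

lemma Rmult[simp]: "a \<in> R \<Longrightarrow> b \<in> R \<Longrightarrow> a * b \<in> R"
  using RR dv_mult[OF dv, of a b] by (cases "a = 0 \<or> b = 0") auto

lemma Rneg[simp]: "a \<in> R \<Longrightarrow> - a \<in> R"
proof -
  assume "a \<in> R"
  moreover have "-1 \<in> R" using RR dv_neg1[OF dv] by simp
  ultimately show ?thesis using Rmult[of "-1" a] by simp
qed

lemma Radd[simp]: "a \<in> R \<Longrightarrow> b \<in> R \<Longrightarrow> a + b \<in> R"
proof -
  assume a: "a \<in> R" and b: "b \<in> R"
  show ?thesis
  proof (cases "a = 0 \<or> b = 0 \<or> a + b = 0")
    case True then show ?thesis using a b by auto
  next
    case False
    then have "val (a + b) \<ge> min (val a) (val b)" using dv unfolding is_dvaluation_def by blast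
    then show ?thesis using a b False RR by auto
  qed
qed

lemma Rdiff[simp]: "a \<in> R \<Longrightarrow> b \<in> R \<Longrightarrow> a - b \<in> R"
  using Radd[of a "-b"] Rneg[of b] by simp

lemma Rsum: "(\<And>i. i \<in> A \<Longrightarrow> f i \<in> R) \<Longrightarrow> sum f A \<in> R"
  by (induction A rule: infinite_finite_induct) auto

lemma Runit: "a \<noteq> 0 \<Longrightarrow> val a = 0 \<Longrightarrow> inverse a \<in> R"
  using RR dv_inv[OF dv, of a] by simp

lemma Rdivunit: "b \<in> R \<Longrightarrow> a \<noteq> 0 \<Longrightarrow> val a = 0 \<Longrightarrow> b / a \<in> R"
  using Runit[of a] Rmult[of b "inverse a"] by (simp add: divide_inverse)

lemma prim_unit:
  assumes "primitive_vec R k x" shows "\<exists>i<k. x i \<noteq> 0 \<and> val (x i) = 0"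
proof (rule ccontr)
  assume H: "\<not> ?thesis"
  have xv: "x \<in> vecs R k" and xn: "x \<noteq> (\<lambda>_. 0)"
    and ds: "direct_summand R k {(\<lambda>i. r * x i) | r. r \<in> R}"
    using assms unfolding primitive_vec_def by auto
  have half: "x i / 2 \<in> R" for i
  proof (cases "i < k \<and> x i \<noteq> 0")
    case True
    then have "val (x i) \<noteq> 0" using H by blast
    moreover have "x i \<in> R" using xv True unfolding vecs_def by blast
    then have "val (x i) \<ge> 0" using True memR by blast
    moreover have "val (x i / 2) = val (x i) + val (inverse 2)"
      unfolding divide_inverse by (rule dv_mult[OF dv]) (use True two in simp_all)
    moreover have "val (inverse (2::'a)) = -1" using dv_inv[OF dv two(1)] two by simp
    ultimately have "val (x i / 2) \<ge> 0" by linarith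
    then show ?thesis using memR by blast
  next
    case False
    then have "x i = 0" using xv unfolding vecs_def by auto
    then show ?thesis by simp
  qed
  have x'v: "(\<lambda>i. x i / 2) \<in> vecs R k" using half xv unfolding vecs_def by auto
  obtain N where N: "submod R k N" "{(\<lambda>i. r * x i) | r. r \<in> R} \<inter> N = {\<lambda>_. 0}"
    "vecs R k = {(\<lambda>i. a i + b i) | a b. a \<in> {(\<lambda>i. r * x i) | r. r \<in> R} \<and> b \<in> N}"
    using ds unfolding direct_summand_def by (elim conjE exE) (intro that)
  obtain s b where sb: "s \<in> R" "b \<in> N" "(\<lambda>i. x i / 2) = (\<lambda>i. s * x i + b i)"
  proof -
    have "(\<lambda>i. x i / 2) \<in> {(\<lambda>i. a i + b i) | a b. a \<in> {(\<lambda>i. r * x i) | r. r \<in> R} \<and> b \<in> N}"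
      using x'v N(3) by simp
    then obtain a b where "a \<in> {(\<lambda>i. r * x i) | r. r \<in> R}" "b \<in> N" "(\<lambda>i. x i / 2) = (\<lambda>i. a i + b i)"
      by blast
    then show ?thesis using that by blast
  qed
  have eq: "(\<lambda>i. (1 - 2 * s) * x i) = (\<lambda>i. 2 * b i)"
  proof
    fix i
    have "x i / 2 = s * x i + b i" using sb(3) by metis
    then have "x i = 2 * s * x i + 2 * b i" using two by (simp add: field_simps)
    then show "(1 - 2 * s) * x i = 2 * b i" by (simp add: algebra_simps)
  qed
  have "(\<lambda>i. 2 * b i) \<in> N" using N(1) sb(2) unfolding submod_def by simp
  moreover have "(\<lambda>i. (1 - 2 * s) * x i) \<in> {(\<lambda>i. r * x i) | r. r \<in> R}" using sb(1) by auto
  ultimately have "(\<lambda>i. (1 - 2 * s) * x i) \<in> {(\<lambda>i. r * x i) | r. r \<in> R} \<inter> N" using eq by simp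
  then have z: "(\<lambda>i. (1 - 2 * s) * x i) = (\<lambda>_. 0)" using N(2) by simp
  have "1 - 2 * s \<noteq> 0"
  proof
    assume "1 - 2 * s = 0"
    then have e: "2 * s = 1" by simp
    then have "s \<noteq> 0" by auto
    then have "val (2 * s) = val 2 + val s" by (intro dv_mult[OF dv] two(1))
    then have "val (2 * s) = 1 + val s" using two by simp
    moreover have "val s \<ge> 0" using sb(1) memR \<open>s \<noteq> 0\<close> by blast
    ultimately show False using e dv_one[OF dv] by simp
  qed
  then have "x = (\<lambda>_. 0)" using z by (metis mult_eq_0_iff)
  then show False using xn by simp
qed

end


lemma bil_add_left: "bil k G (\<lambda>i. x i + y i) z = bil k G x z + bil k G y z"
  by (simp add: bil_def algebra_simps sum.distrib)
lemma bil_add_right: "bil k G z (\<lambda>i. x i + y i) = bil k G z x + bil k G z y"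
  by (simp add: bil_def algebra_simps sum.distrib)
lemma bil_smult_left: "bil k G (\<lambda>i. c * x i) z = c * bil k G x z"
  by (simp add: bil_def sum_distrib_left algebra_simps)
lemma bil_smult_right: "bil k G z (\<lambda>i. c * x i) = c * bil k G z x"
  by (simp add: bil_def sum_distrib_left algebra_simps)
lemma bil_sym: assumes "\<forall>i<k. \<forall>j<k. G i j = G j i" shows "bil k G x y = bil k G y x"
  unfolding bil_def
  by (subst sum.swap) (auto intro!: sum.cong simp: assms mult.commute mult.left_commute)
lemma bil_cong: "(\<And>i. i < k \<Longrightarrow> x i = x' i) \<Longrightarrow> (\<And>i. i < k \<Longrightarrow> y i = y' i) \<Longrightarrow> bil k G x y = bil k G x' y'"
  unfolding bil_def by (intro sum.cong) auto

lemma sum_split_add: fixes f :: "nat \<Rightarrow> 'b::comm_monoid_add" and m j :: nat shows "(\<Sum>a<m + j. f a) = (\<Sum>a<m. f a) + (\<Sum>i<j. f (m + i))"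
  by (induction j) (simp_all add: algebra_simps)

lemma sum_pairs: fixes f :: "nat \<Rightarrow> 'b::comm_monoid_add" and m :: nat shows "(\<Sum>a<2 * m. f a) = (\<Sum>j<m. f (2 * j) + f (2 * j + 1))"
  by (induction m) (simp_all add: algebra_simps)

lemma bil_hyp:
  "bil (2 * m + kJ) (hyp_sum m GJ) s t =
     (\<Sum>j<m. s (2 * j) * t (2 * j + 1) + s (2 * j + 1) * t (2 * j)) +
     bil kJ GJ (\<lambda>i. s (2 * m + i)) (\<lambda>i. t (2 * m + i))"
proof -
  define pa where "pa = (\<lambda>a::nat. if even a then a + 1 else a - 1)"
  have inner1: "(\<Sum>b<2 * m + kJ. s a * hyp_sum m GJ a b * t b) = s a * t (pa a)" if a: "a < 2 * m" for a
  proof -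
    have "(\<Sum>b<2 * m + kJ. s a * hyp_sum m GJ a b * t b) =
      (\<Sum>b<2 * m. s a * hyp_sum m GJ a b * t b) + (\<Sum>i<kJ. s a * hyp_sum m GJ a (2 * m + i) * t (2 * m + i))"
      by (rule sum_split_add)
    also have "(\<Sum>i<kJ. s a * hyp_sum m GJ a (2 * m + i) * t (2 * m + i)) = 0"
      using a by (simp add: hyp_sum_def)
    also have "(\<Sum>b<2 * m. s a * hyp_sum m GJ a b * t b) = (\<Sum>b<2 * m. if b = pa a then s a * t b else 0)"
    proof (rule sum.cong)
      fix b assume "b \<in> {..<2 * m}"
      then have b: "b < 2 * m" by simp
      have "(a div 2 = b div 2 \<and> a \<noteq> b) \<longleftrightarrow> b = pa a" unfolding pa_def by presburger
      then show "s a * hyp_sum m GJ a b * t b = (if b = pa a then s a * t b else 0)"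
        using a b by (auto simp: hyp_sum_def)
    qed simp
    also have "\<dots> = s a * t (pa a)"
    proof -
      have "pa a < 2 * m" using a unfolding pa_def by presburger
      then show ?thesis by (simp add: sum.delta')
    qed
    finally show ?thesis by simp
  qed
  have inner2: "(\<Sum>b<2 * m + kJ. s (2 * m + i) * hyp_sum m GJ (2 * m + i) b * t b) =
      (\<Sum>l<kJ. s (2 * m + i) * GJ i l * t (2 * m + l))" for i
  proof -
    have "(\<Sum>b<2 * m + kJ. s (2 * m + i) * hyp_sum m GJ (2 * m + i) b * t b) =
      (\<Sum>b<2 * m. s (2 * m + i) * hyp_sum m GJ (2 * m + i) b * t b) + (\<Sum>l<kJ. s (2 * m + i) * hyp_sum m GJ (2 * m + i) (2 * m + l) * t (2 * m + l))"
      by (rule sum_split_add)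
    also have "(\<Sum>b<2 * m. s (2 * m + i) * hyp_sum m GJ (2 * m + i) b * t b) = 0"
      by (intro sum.neutral) (auto simp: hyp_sum_def)
    also have "(\<Sum>l<kJ. s (2 * m + i) * hyp_sum m GJ (2 * m + i) (2 * m + l) * t (2 * m + l)) =
        (\<Sum>l<kJ. s (2 * m + i) * GJ i l * t (2 * m + l))"
      by (simp add: hyp_sum_def)
    finally show ?thesis by simp
  qed
  have "bil (2 * m + kJ) (hyp_sum m GJ) s t =
     (\<Sum>a<2 * m. \<Sum>b<2 * m + kJ. s a * hyp_sum m GJ a b * t b) +
     (\<Sum>i<kJ. \<Sum>b<2 * m + kJ. s (2 * m + i) * hyp_sum m GJ (2 * m + i) b * t b)"
    unfolding bil_def by (rule sum_split_add)
  also have "(\<Sum>a<2 * m. \<Sum>b<2 * m + kJ. s a * hyp_sum m GJ a b * t b) = (\<Sum>a<2 * m. s a * t (pa a))"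
    using inner1 by (intro sum.cong) auto
  also have "\<dots> = (\<Sum>j<m. s (2 * j) * t (2 * j + 1) + s (2 * j + 1) * t (2 * j))"
    unfolding sum_pairs pa_def by simp
  also have "(\<Sum>i<kJ. \<Sum>b<2 * m + kJ. s (2 * m + i) * hyp_sum m GJ (2 * m + i) b * t b) =
      bil kJ GJ (\<lambda>i. s (2 * m + i)) (\<lambda>i. t (2 * m + i))"
    unfolding bil_def using inner2 by simp
  finally show ?thesis .
qed

definition skip :: "nat \<Rightarrow> nat \<Rightarrow> nat" where "skip k j = (if j < k then j else Suc j)"
definition unskip :: "nat \<Rightarrow> nat \<Rightarrow> nat" where "unskip k i = (if i < k then i else i - 1)"

lemma sum_skip:
  assumes "k < n" "g k = 0"
  shows "(\<Sum>j<n - 1. g (skip k j)) = (\<Sum>i<n. g i)"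
proof -
  have inj: "inj_on (skip k) {..<n - 1}" unfolding inj_on_def skip_def by auto
  have img: "skip k ` {..<n - 1} = {..<n} - {k}"
  proof
    show "skip k ` {..<n - 1} \<subseteq> {..<n} - {k}" using assms(1) unfolding skip_def by auto
    show "{..<n} - {k} \<subseteq> skip k ` {..<n - 1}"
    proof
      fix i assume "i \<in> {..<n} - {k}"
      then have "i = skip k (unskip k i)" "unskip k i < n - 1"
        using assms(1) unfolding skip_def unskip_def by auto
      then show "i \<in> skip k ` {..<n - 1}" by blast
    qed
  qed
  have "(\<Sum>j<n - 1. g (skip k j)) = (\<Sum>i\<in>{..<n} - {k}. g i)"
    using sum.reindex[OF inj, of g] img by simp
  also have "\<dots> = (\<Sum>i<n. g i)"
    using assms by (intro sum.mono_neutral_left) auto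
  finally show ?thesis .
qed



definition halfU :: "(nat \<Rightarrow> nat \<Rightarrow> 'a::field) \<Rightarrow> nat \<Rightarrow> nat \<Rightarrow> 'a" where
  "halfU G i l = (if i < l then G i l else if i = l then G i i / 2 else 0)"

lemma halfU_sum:
  assumes "(2::'a::field) \<noteq> 0" "i < n" "l < n" "\<forall>i<n. \<forall>j<n. G i j = G j i"
  shows "halfU G l i + halfU G i l = (G i l :: 'a)"
  using assms unfolding halfU_def by (auto simp: field_simps)

lemma Usum:
  fixes G :: "nat \<Rightarrow> nat \<Rightarrow> 'a::field"
  assumes "(2::'a) \<noteq> 0" "\<forall>i<n. \<forall>j<n. G i j = G j i"
  shows "(\<Sum>i<n. p i * (\<Sum>l<n. halfU G l i * p' l)) + (\<Sum>i<n. (\<Sum>l<n. halfU G l i * p l) * p' i)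
     = bil n G p p'"
proof -
  have a: "(\<Sum>i<n. p i * (\<Sum>l<n. halfU G l i * p' l)) = (\<Sum>i<n. \<Sum>l<n. p i * halfU G l i * p' l)"
    by (simp add: sum_distrib_left mult.assoc)
  have "(\<Sum>i<n. (\<Sum>l<n. halfU G l i * p l) * p' i) = (\<Sum>i<n. \<Sum>l<n. halfU G l i * p l * p' i)"
    by (simp add: sum_distrib_right)
  also have "\<dots> = (\<Sum>l<n. \<Sum>i<n. halfU G l i * p l * p' i)" by (rule sum.swap)
  also have "\<dots> = (\<Sum>i<n. \<Sum>l<n. p i * halfU G i l * p' l)"
    by (simp add: mult.commute mult.left_commute)
  finally have b: "(\<Sum>i<n. (\<Sum>l<n. halfU G l i * p l) * p' i) = (\<Sum>i<n. \<Sum>l<n. p i * halfU G i l * p' l)" .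
  have "(\<Sum>i<n. \<Sum>l<n. p i * halfU G l i * p' l) + (\<Sum>i<n. \<Sum>l<n. p i * halfU G i l * p' l)
      = (\<Sum>i<n. \<Sum>l<n. p i * (halfU G l i + halfU G i l) * p' l)"
    by (simp add: sum.distrib[symmetric] algebra_simps)
  also have "\<dots> = (\<Sum>i<n. \<Sum>l<n. p i * G i l * p' l)"
    using halfU_sum[OF assms(1) _ _ assms(2)] by (intro sum.cong) auto
  finally show ?thesis using a b unfolding bil_def by simp
qed

lemma bil_left_vec:
  "bil n G x p = (\<Sum>l<n. (\<Sum>s<n. x s * G s l) * p l)"
  unfolding bil_def by (subst sum.swap) (simp add: sum_distrib_right)

lemma mult_ite1: "(x::'a::semiring_1) * (if P then 1 else 0) = (if P then x else 0)" by simp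
lemma mult_ite2: "(if P then 1 else 0) * (x::'a::semiring_1) = (if P then x else 0)" by simp

lemma bil_e:
  assumes "i < n" "l < n"
  shows "bil n G (\<lambda>j. if j = i then 1 else 0) (\<lambda>j. if j = l then 1 else 0) = (G i l :: 'a::field)"
  using assms unfolding bil_def by (simp add: mult_ite1 mult_ite2 sum.delta)



lemma vecs_allR: "v \<in> vecs R n \<Longrightarrow> (0::'a::field) \<in> R \<Longrightarrow> v i \<in> R"
  unfolding vecs_def by (cases "i < n") auto

theorem lemma6p6:
  fixes R :: "'a::field set"
    and n kJ :: nat
    and G GJ :: "nat \<Rightarrow> nat \<Rightarrow> 'a"
  assumes "dyadic_local_int_ring R"
    and "n \<ge> 1"
    and "is_lattice R n G"
    and "even_lattice R n G"
    and "is_lattice R kJ GJ"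
    and "Qstar R n G \<inter> Qstar R kJ GJ \<noteq> {}"
  shows "\<exists>\<sigma>. prim_repr R n G (2 * (n - 1) + kJ) (hyp_sum (n - 1) GJ) \<sigma>"
proof -
  obtain val where "is_dvaluation val" "(2::'a) \<noteq> 0" "val 2 = 1" "R = {x. x = 0 \<or> val x \<ge> 0}"
    using assms(1) unfolding dyadic_local_int_ring_def by blast
  then interpret dvr R val by unfold_locales
  obtain x y where x: "primitive_vec R n x" and y: "primitive_vec R kJ y"
    and Qxy: "Qf n G x = Qf kJ GJ y"
    using assms(6) unfolding Qstar_def by blast
  obtain k where k: "k < n" "x k \<noteq> 0" "val (x k) = 0" using prim_unit[OF x] by blast
  obtain q where q: "q < kJ" "y q \<noteq> 0" "val (y q) = 0" using prim_unit[OF y] by blast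
  have xv: "x \<in> vecs R n" using x unfolding primitive_vec_def by blast
  have yv: "y \<in> vecs R kJ" using y unfolding primitive_vec_def by blast
  have xR: "x i \<in> R" for i using vecs_allR[OF xv] by simp
  have yR: "y i \<in> R" for i using vecs_allR[OF yv] by simp
  have x0: "i \<ge> n \<Longrightarrow> x i = 0" for i using xv unfolding vecs_def by auto
  have y0: "i \<ge> kJ \<Longrightarrow> y i = 0" for i using yv unfolding vecs_def by auto
  have symG: "\<forall>i<n. \<forall>j<n. G i j = G j i" using assms(3) unfolding is_lattice_def by blast
  define e where "e = (\<lambda>i j::nat. if j = i then (1::'a) else 0)"
  have ev: "i < n \<Longrightarrow> e i \<in> vecs R n" for i unfolding e_def vecs_def by auto
  have GR: "G i l \<in> R" if "i < n" "l < n" for i l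
    using assms(3) ev[OF that(1)] ev[OF that(2)] bil_e[OF that, of G] unfolding is_lattice_def e_def
    by metis
  have Ghalf: "G i i / 2 \<in> R" if "i < n" for i
  proof -
    have "Qf n G (e i) \<in> {2 * r | r. r \<in> R}" using assms(4) ev[OF that] unfolding even_lattice_def by blast
    moreover have "Qf n G (e i) = G i i" unfolding Qf_def e_def using bil_e[OF that that, of G] by simp
    ultimately obtain r where "r \<in> R" "G i i = 2 * r" by auto
    then show ?thesis using two(1) by simp
  qed
  have UR: "halfU G l i \<in> R" if "l < n" "i < n" for l i
    unfolding halfU_def using GR[OF that] Ghalf[OF that(1)] by auto
  define MM where "MM = 2 * (n - 1) + kJ"
  define rr where "rr = (\<lambda>v::nat\<Rightarrow>'a. v k / x k)"
  define pp where "pp = (\<lambda>v i. v i - rr v * x i)"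
  define bb where "bb = (\<lambda>l. \<Sum>s<n. x s * G s l)"
  define T where "T = (\<lambda>v i. (\<Sum>l<n. halfU G l i * pp v l) + rr v * bb i)"
  define \<sigma> where "\<sigma> = (\<lambda>v a. if a < 2 * (n - 1) then
      (if even a then pp v (skip k (a div 2)) else T v (skip k (a div 2)))
    else if a < MM then rr v * y (a - 2 * (n - 1)) else 0)"
  have ppk: "pp v k = 0" for v unfolding pp_def rr_def using k(2) by simp
  have vdec: "v = (\<lambda>i. rr v * x i + pp v i)" for v unfolding pp_def by simp
  have skipn: "j < n - 1 \<Longrightarrow> skip k j < n" for j unfolding skip_def by auto

  have rrR: "v \<in> vecs R n \<Longrightarrow> rr v \<in> R" for v
    unfolding rr_def using vecs_allR[of v R n k] k by (simp add: Rdivunit)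
  have ppR: "v \<in> vecs R n \<Longrightarrow> pp v i \<in> R" for v i
    unfolding pp_def using rrR[of v] vecs_allR[of v R n i] xR[of i] by simp
  have bbR: "i < n \<Longrightarrow> bb i \<in> R" for i
    unfolding bb_def using xR GR by (intro Rsum) simp
  have TR: "v \<in> vecs R n \<Longrightarrow> i < n \<Longrightarrow> T v i \<in> R" for v i
    unfolding T_def by (intro Radd Rmult Rsum) (auto intro: UR ppR rrR bbR)
  have \<sigma>R: "\<sigma> v \<in> vecs R MM" if v: "v \<in> vecs R n" for v
  proof -
    have "\<sigma> v a \<in> R" for a
    proof -
      have "a < 2 * (n - 1) \<Longrightarrow> a div 2 < n - 1" by presburger
      then show ?thesis unfolding \<sigma>_def using ppR[OF v] TR[OF v] rrR[OF v] yR skipn by auto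
    qed
    moreover have "a \<ge> MM \<Longrightarrow> \<sigma> v a = 0" for a unfolding \<sigma>_def MM_def by simp
    ultimately show ?thesis unfolding vecs_def by simp
  qed

  have rr_add: "rr (\<lambda>i. v i + w i) = rr v + rr w" for v w unfolding rr_def by (simp add: add_divide_distrib)
  have rr_mult: "rr (\<lambda>i. c * v i) = c * rr v" for c v unfolding rr_def by simp
  have pp_add: "pp (\<lambda>i. v i + w i) = (\<lambda>i. pp v i + pp w i)" for v w
    unfolding pp_def rr_add by (simp add: algebra_simps)
  have pp_mult: "pp (\<lambda>i. c * v i) = (\<lambda>i. c * pp v i)" for c v
    unfolding pp_def rr_mult by (simp add: algebra_simps)
  have T_add: "T (\<lambda>i. v i + w i) i = T v i + T w i" for v w i
    unfolding T_def pp_add rr_add by (simp add: algebra_simps sum.distrib)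
  have T_mult: "T (\<lambda>i. c * v i) i = c * T v i" for c v i
    unfolding T_def pp_mult rr_mult by (simp add: algebra_simps sum_distrib_left)
  have \<sigma>_add: "\<sigma> (\<lambda>i. v i + w i) = (\<lambda>a. \<sigma> v a + \<sigma> w a)" for v w
    unfolding \<sigma>_def by (rule ext) (simp add: T_add pp_add rr_add algebra_simps)
  have \<sigma>_mult: "\<sigma> (\<lambda>i. c * v i) = (\<lambda>a. c * \<sigma> v a)" for c v
    unfolding \<sigma>_def by (rule ext) (simp add: T_mult pp_mult rr_mult algebra_simps)
  have \<sigma>0: "\<sigma> (\<lambda>_. 0) = (\<lambda>_. 0)"
    using \<sigma>_mult[of 0 "\<lambda>_. 0"] by simp

  have iso: "bil MM (hyp_sum (n - 1) GJ) (\<sigma> v) (\<sigma> w) = bil n G v w" for v w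
  proof -
    define F where "F = (\<lambda>i. pp v i * T w i + T v i * pp w i)"
    have "bil MM (hyp_sum (n - 1) GJ) (\<sigma> v) (\<sigma> w) =
      (\<Sum>j<n - 1. \<sigma> v (2 * j) * \<sigma> w (2 * j + 1) + \<sigma> v (2 * j + 1) * \<sigma> w (2 * j)) +
      bil kJ GJ (\<lambda>i. \<sigma> v (2 * (n - 1) + i)) (\<lambda>i. \<sigma> w (2 * (n - 1) + i))"
      unfolding MM_def by (rule bil_hyp)
    also have "(\<Sum>j<n - 1. \<sigma> v (2 * j) * \<sigma> w (2 * j + 1) + \<sigma> v (2 * j + 1) * \<sigma> w (2 * j))
        = (\<Sum>j<n - 1. F (skip k j))"
    proof (rule sum.cong)
      fix j assume "j \<in> {..<n - 1}"
      then have j: "j < n - 1" by simp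
      have "(2 * j + 1) div 2 = j" by presburger
      then show "\<sigma> v (2 * j) * \<sigma> w (2 * j + 1) + \<sigma> v (2 * j + 1) * \<sigma> w (2 * j) = F (skip k j)"
        using j unfolding \<sigma>_def F_def by simp
    qed simp
    also have "\<dots> = (\<Sum>i<n. F i)" by (rule sum_skip[OF k(1)]) (simp add: F_def ppk)
    also have "bil kJ GJ (\<lambda>i. \<sigma> v (2 * (n - 1) + i)) (\<lambda>i. \<sigma> w (2 * (n - 1) + i)) =
        bil kJ GJ (\<lambda>i. rr v * y i) (\<lambda>i. rr w * y i)"
      by (rule bil_cong) (simp_all add: \<sigma>_def MM_def)
    also have "\<dots> = rr v * rr w * Qf kJ GJ y"
      unfolding Qf_def bil_smult_left bil_smult_right by simp
    also have "(\<Sum>i<n. F i) = ((\<Sum>i<n. pp v i * (\<Sum>l<n. halfU G l i * pp w l)) +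
          (\<Sum>i<n. (\<Sum>l<n. halfU G l i * pp v l) * pp w i)) +
        rr w * (\<Sum>i<n. pp v i * bb i) + rr v * (\<Sum>i<n. bb i * pp w i)"
      unfolding F_def T_def by (simp add: algebra_simps sum.distrib sum_distrib_left)
    also have "(\<Sum>i<n. pp v i * (\<Sum>l<n. halfU G l i * pp w l)) +
          (\<Sum>i<n. (\<Sum>l<n. halfU G l i * pp v l) * pp w i) = bil n G (pp v) (pp w)"
      by (rule Usum[OF two(1) symG])
    finally have L: "bil MM (hyp_sum (n - 1) GJ) (\<sigma> v) (\<sigma> w) =
        bil n G (pp v) (pp w) + rr w * (\<Sum>i<n. pp v i * bb i) + rr v * (\<Sum>i<n. bb i * pp w i)
        + rr v * rr w * Qf kJ GJ y" .
    have bx: "bil n G x p = (\<Sum>i<n. bb i * p i)" for p unfolding bb_def by (rule bil_left_vec)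
    have "bil n G v w = bil n G (\<lambda>i. rr v * x i + pp v i) (\<lambda>i. rr w * x i + pp w i)"
      using vdec[of v] vdec[of w] by simp
    also have "\<dots> = rr v * rr w * bil n G x x + rr v * bil n G x (pp w) + rr w * bil n G (pp v) x
        + bil n G (pp v) (pp w)"
      by (simp add: bil_add_left bil_add_right bil_smult_left bil_smult_right algebra_simps)
    also have "bil n G (pp v) x = bil n G x (pp v)" by (rule bil_sym[OF symG])
    finally have Rt: "bil n G v w = rr v * rr w * Qf n G x + rr v * (\<Sum>i<n. bb i * pp w i)
        + rr w * (\<Sum>i<n. bb i * pp v i) + bil n G (pp v) (pp w)"
      unfolding bx Qf_def .
    show ?thesis unfolding L Rt Qxy by (simp add: algebra_simps)
  qed
  have vadd: "v \<in> vecs R m \<Longrightarrow> w \<in> vecs R m \<Longrightarrow> (\<lambda>i. v i + w i) \<in> vecs R m" for v w m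
    unfolding vecs_def by auto
  have vmult: "c \<in> R \<Longrightarrow> v \<in> vecs R m \<Longrightarrow> (\<lambda>i. c * v i) \<in> vecs R m" for c v m
    unfolding vecs_def by auto
  have v0: "(\<lambda>_. 0) \<in> vecs R m" for m unfolding vecs_def by auto
  define Img where "Img = \<sigma> ` vecs R n"
  define Nc where "Nc = {w \<in> vecs R MM. (\<forall>j<n - 1. w (2 * j) = 0) \<and> w (2 * (n - 1) + q) = 0}"
  have subImg: "submod R MM Img"
    unfolding submod_def
  proof (intro conjI ballI)
    show "Img \<subseteq> vecs R MM" unfolding Img_def using \<sigma>R by blast
    show "(\<lambda>_. 0) \<in> Img" unfolding Img_def using \<sigma>0 v0[of n] by (metis image_eqI)
  next
    fix a b assume "a \<in> Img" "b \<in> Img"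
    then obtain v w where "v \<in> vecs R n" "w \<in> vecs R n" "a = \<sigma> v" "b = \<sigma> w" unfolding Img_def by blast
    then have "(\<lambda>i. a i + b i) = \<sigma> (\<lambda>i. v i + w i)" "(\<lambda>i. v i + w i) \<in> vecs R n"
      using \<sigma>_add[of v w] vadd[of v n w] by simp_all
    then show "(\<lambda>i. a i + b i) \<in> Img" unfolding Img_def by blast
  next
    fix c a assume "c \<in> R" "a \<in> Img"
    then obtain v where "v \<in> vecs R n" "a = \<sigma> v" unfolding Img_def by blast
    then have "(\<lambda>i. c * a i) = \<sigma> (\<lambda>i. c * v i)" "(\<lambda>i. c * v i) \<in> vecs R n"
      using \<sigma>_mult[of c v] vmult[of c v n] \<open>c \<in> R\<close> by simp_all
    then show "(\<lambda>i. c * a i) \<in> Img" unfolding Img_def by blast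
  qed
  have subN: "submod R MM Nc"
    unfolding submod_def Nc_def using vadd vmult v0 by auto
  have int: "Img \<inter> Nc = {\<lambda>_. 0}"
  proof
    show "{\<lambda>_. 0} \<subseteq> Img \<inter> Nc" using subImg subN unfolding submod_def by auto
    show "Img \<inter> Nc \<subseteq> {\<lambda>_. 0}"
    proof
      fix a assume "a \<in> Img \<inter> Nc"
      then obtain v where v: "v \<in> vecs R n" "a = \<sigma> v" and aN: "a \<in> Nc" unfolding Img_def by blast
      have "\<sigma> v (2 * (n - 1) + q) = 0" using aN v(2) unfolding Nc_def by simp
      then have "rr v * y q = 0" unfolding \<sigma>_def MM_def using q(1) by simp
      then have r0: "rr v = 0" using q(2) by simp
      have p0: "pp v i = 0" if "i < n" for i
      proof (cases "i = k")
        case True then show ?thesis using ppk by simp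
      next
        case False
        have u: "unskip k i < n - 1" "skip k (unskip k i) = i"
          using False that k(1) unfolding skip_def unskip_def by auto
        have "(2 * unskip k i) div 2 = unskip k i" by simp
        then have "\<sigma> v (2 * unskip k i) = pp v i" unfolding \<sigma>_def using u by simp
        moreover have "\<sigma> v (2 * unskip k i) = 0" using aN v(2) u(1) unfolding Nc_def by simp
        ultimately show ?thesis by simp
      qed
      have "v = (\<lambda>_. 0)"
      proof
        fix i show "v i = 0"
        proof (cases "i < n")
          case True then show ?thesis using vdec[of v] r0 p0[OF True] by (metis add_0 mult_zero_left)
        next
          case False then show ?thesis using v(1) unfolding vecs_def by simp
        qed
      qed
      then show "a \<in> {\<lambda>_. 0}" using v(2) \<sigma>0 by simp
    qed
  qed
  have dec: "vecs R MM = {(\<lambda>i. a i + b i) | a b. a \<in> Img \<and> b \<in> Nc}"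
  proof
    show "{(\<lambda>i. a i + b i) | a b. a \<in> Img \<and> b \<in> Nc} \<subseteq> vecs R MM"
    proof
      fix u assume "u \<in> {(\<lambda>i. a i + b i) | a b. a \<in> Img \<and> b \<in> Nc}"
      then obtain a b where ab: "a \<in> Img" "b \<in> Nc" "u = (\<lambda>i. a i + b i)" by blast
      have "Img \<subseteq> vecs R MM" "Nc \<subseteq> vecs R MM" using subImg subN unfolding submod_def by simp_all
      then have "a \<in> vecs R MM" "b \<in> vecs R MM" using ab by auto
      then show "u \<in> vecs R MM" using vadd[of a MM b] ab(3) by simp
    qed
    show "vecs R MM \<subseteq> {(\<lambda>i. a i + b i) | a b. a \<in> Img \<and> b \<in> Nc}"
    proof
      fix w assume w: "w \<in> vecs R MM"
      have wR: "w i \<in> R" for i using vecs_allR[OF w] by simp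
      define t where "t = w (2 * (n - 1) + q) / y q"
      have tR: "t \<in> R" unfolding t_def using wR q by (simp add: Rdivunit)
      define v where "v = (\<lambda>i. t * x i + (if i < n \<and> i \<noteq> k then w (2 * unskip k i) else 0))"
      have vv: "v \<in> vecs R n" unfolding vecs_def v_def using tR xR wR x0 by auto
      have rv: "rr v = t" unfolding rr_def v_def using k(2) by simp
      have pv: "pp v i = (if i < n \<and> i \<noteq> k then w (2 * unskip k i) else 0)" for i
        unfolding pp_def rv unfolding v_def by simp
      define z where "z = (\<lambda>a. w a - \<sigma> v a)"
      have zN: "z \<in> Nc"
        unfolding Nc_def
      proof (intro CollectI conjI allI impI)
        show "z \<in> vecs R MM" using w \<sigma>R[OF vv] unfolding z_def vecs_def by auto
      next
        fix j assume j: "j < n - 1"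
        have s: "skip k j < n" "skip k j \<noteq> k" "unskip k (skip k j) = j"
          using j k(1) unfolding skip_def unskip_def by auto
        have "(2 * j) div 2 = j" by simp
        then have "\<sigma> v (2 * j) = pp v (skip k j)" unfolding \<sigma>_def using j by simp
        also have "\<dots> = w (2 * j)" using pv s by simp
        finally show "z (2 * j) = 0" unfolding z_def by simp
      next
        have "\<sigma> v (2 * (n - 1) + q) = t * y q" unfolding \<sigma>_def MM_def rv using q(1) by simp
        also have "\<dots> = w (2 * (n - 1) + q)" unfolding t_def using q(2) by simp
        finally show "z (2 * (n - 1) + q) = 0" unfolding z_def by simp
      qed
      have "w = (\<lambda>i. \<sigma> v i + z i)" unfolding z_def by simp
      moreover have "\<sigma> v \<in> Img" unfolding Img_def using vv by blast
      ultimately show "w \<in> {(\<lambda>i. a i + b i) | a b. a \<in> Img \<and> b \<in> Nc}" using zN by blast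
    qed
  qed
  have ds: "direct_summand R MM Img"
    unfolding direct_summand_def using subImg subN int dec by blast
  show ?thesis
    unfolding prim_repr_def
  proof (intro exI conjI ballI)
    show "\<sigma> v \<in> vecs R (2 * (n - 1) + kJ)" if "v \<in> vecs R n" for v using \<sigma>R[OF that] MM_def by simp
    show "\<sigma> (\<lambda>i. v i + w i) = (\<lambda>i. \<sigma> v i + \<sigma> w i)" for v w by (rule \<sigma>_add)
    show "\<sigma> (\<lambda>i. c * v i) = (\<lambda>i. c * \<sigma> v i)" for c v by (rule \<sigma>_mult)
    show "bil (2 * (n - 1) + kJ) (hyp_sum (n - 1) GJ) (\<sigma> v) (\<sigma> w) = bil n G v w" for v w
      using iso MM_def by simp
    show "direct_summand R (2 * (n - 1) + kJ) (\<sigma> ` vecs R n)" using ds MM_def Img_def by simp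
  qed
qed


end
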